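(* For all $\theta_1,\theta_2\in\mathbb{R}$, the mixed-power-Euclidean bilinear form $g^{E,\theta_1,\theta_2}$ on $\mathrm{SPD}_n$ is symmetric and positive definite at every point, hence a Riemannian metric on $\mathrm{SPD}_n$; moreover $g^{E,\theta_1,\theta_2}=g^{E,\theta_2,\theta_1}$.
   Context: For $\theta\in\mathbb{R}$ define $\varphi_\theta:\mathrm{SPD}_n\to\mathrm{Sym}_n$ by $\varphi_\theta=\frac1\theta\mathrm{pow}_\theta$ if $\theta\neq0$ and $\varphi_0=\log$, where $\mathrm{pow}_\theta=\exp\circ(\theta\log)$ is the matrix power (acting on eigenvalues) and $\log$ the symmetric matrix logarithm; $\partial_X\varphi_\theta(\Sigma)$ denotes the differential of $\varphi_\theta$ at $\Sigma$ applied to $X\in\mathrm{Sym}_n\cong T_\Sigma\mathrm{SPD}_n$. The mixed-power-Euclidean bilinear form is $g^{E,\theta_1,\theta_2}_\Sigma(X,Y)=\mathrm{tr}\big(\partial_X\varphi_{\theta_1}(\Sigma)\,\partial_Y\varphi_{\theta_2}(\Sigma)\big)$, i.e. $\frac{1}{\theta_1\theta_2}\mathrm{tr}(\partial_X\mathrm{pow}_{\theta_1}(\Sigma)\,\partial_Y\mathrm{pow}_{\theta_2}(\Sigma))$ when $\theta_1\theta_2\ne0$. *)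

theory Defs
  imports "HOL-Analysis.Analysis"
begin

definition Sym :: "(real^'n^'n) set" where
  "Sym = {A. transpose A = A}"

definition SPD :: "(real^'n^'n) set" where
  "SPD = {A. transpose A = A \<and> (\<forall>x. x \<noteq> 0 \<longrightarrow> x \<bullet> (A *v x) > 0)}"

definition diag_mat :: "('n::finite \<Rightarrow> real) \<Rightarrow> real^'n^'n" where
  "diag_mat d = (\<chi> i j. if i = j then d i else 0)"

definition matfun :: "(real \<Rightarrow> real) \<Rightarrow> real^'n^'n \<Rightarrow> real^'n^'n" where
  "matfun f A = (SOME M. \<exists>U d. orthogonal_matrix U \<and> A = U ** diag_mat d ** transpose U
                               \<and> M = U ** diag_mat (\<lambda>i. f (d i)) ** transpose U)"

definition mat_log :: "real^'n^'n \<Rightarrow> real^'n^'n" where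
  "mat_log = matfun ln"

definition mat_pow :: "real \<Rightarrow> real^'n^'n \<Rightarrow> real^'n^'n" where
  "mat_pow \<theta> = matfun (\<lambda>x. exp (\<theta> * ln x))"

definition phi :: "real \<Rightarrow> real^'n^'n \<Rightarrow> real^'n^'n" where
  "phi \<theta> = (if \<theta> = 0 then mat_log else (\<lambda>A. (1 / \<theta>) *\<^sub>R mat_pow \<theta> A))"

definition dphi :: "real \<Rightarrow> real^'n^'n \<Rightarrow> real^'n^'n \<Rightarrow> real^'n^'n" where
  "dphi \<theta> \<Sigma> X = vector_derivative (\<lambda>t. phi \<theta> (\<Sigma> + t *\<^sub>R X)) (at 0)"

definition gE :: "real \<Rightarrow> real \<Rightarrow> real^'n^'n \<Rightarrow> real^'n^'n \<Rightarrow> real^'n^'n \<Rightarrow> real" where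
  "gE \<theta>1 \<theta>2 \<Sigma> X Y = trace (dphi \<theta>1 \<Sigma> X ** dphi \<theta>2 \<Sigma> Y)"

end

theory Submission
  imports Defs
begin
lemma sym_inner:
  fixes A :: "real^'n^'n"
  assumes "transpose A = A" shows "(A *v x) \<bullet> y = x \<bullet> (A *v y)"
  by (metis assms dot_lmul_matrix inner_commute transpose_matrix_vector)

lemma quad_scale: "(c *\<^sub>R y) \<bullet> ((A::real^'n^'n) *v (c *\<^sub>R y)) = c^2 * (y \<bullet> (A *v y))"
  by (simp add: matrix_vector_mult_scaleR power2_eq_square)

lemma eigvec_exists:
  fixes A :: "real^'n^'n"
  assumes sym: "transpose A = A" and S: "subspace S" and inv: "\<And>x. x \<in> S \<Longrightarrow> A *v x \<in> S"
    and ne: "S \<noteq> {0}"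
  shows "\<exists>v\<in>S. norm v = 1 \<and> A *v v = (v \<bullet> (A *v v)) *\<^sub>R v"
proof -
  let ?q = "\<lambda>x. x \<bullet> (A *v x)"
  let ?K = "S \<inter> sphere 0 1"
  have cK: "compact ?K" using S by (simp add: closed_subspace closed_Int_compact)
  obtain x where x: "x \<in> S" "x \<noteq> 0" using ne S subspace_0 by blast
  then have "x /\<^sub>R norm x \<in> ?K" using S by (simp add: subspace_scale)
  hence neK: "?K \<noteq> {}" by blast
  have cont: "continuous_on ?K ?q"
    by (intro continuous_on_inner continuous_on_id matrix_vector_mult_linear_continuous_on)
  obtain v where v: "v \<in> ?K" "\<And>y. y \<in> ?K \<Longrightarrow> ?q y \<le> ?q v"
    using continuous_attains_sup[OF cK neK cont] by blast
  define m where "m = ?q v"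
  have vS: "v \<in> S" and nv: "norm v = 1" using v(1) by auto
  have vv: "v \<bullet> v = 1" using nv by (simp add: norm_eq_1)
  have bound: "?q y \<le> m * (norm y)^2" if y: "y \<in> S" for y
  proof (cases "y = 0")
    case True then show ?thesis by simp
  next
    case False
    define z where "z = (1 / norm y) *\<^sub>R y"
    have "z \<in> ?K" using y False S by (simp add: z_def subspace_scale)
    hence "?q z \<le> m" using v(2) m_def by blast
    moreover have "?q z = ?q y / (norm y)^2"
      unfolding z_def quad_scale by (simp add: power_divide)
    ultimately have "?q y / (norm y)^2 \<le> m" by simp
    then show ?thesis using False by (simp add: divide_le_eq mult.commute)
  qed
  define w where "w = A *v v - m *\<^sub>R v"
  have wS: "w \<in> S" unfolding w_def using S inv[OF vS] vS by (simp add: subspace_diff subspace_scale)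
  have vw: "v \<bullet> w = 0" unfolding w_def by (simp add: inner_diff_right vv m_def)
  have wAv: "w \<bullet> (A *v v) = w \<bullet> w"
  proof -
    have "A *v v = w + m *\<^sub>R v" by (simp add: w_def)
    hence "w \<bullet> (A *v v) = w \<bullet> w + m * (w \<bullet> v)" by (simp add: inner_add_right)
    thus ?thesis using vw by (simp add: inner_commute)
  qed
  have key: "2 * s * (w \<bullet> w) \<le> s^2 * (m * (w \<bullet> w) - ?q w)" for s
  proof -
    have yS: "v + s *\<^sub>R w \<in> S" using S vS wS by (simp add: subspace_add subspace_scale)
    have e1: "?q (v + s *\<^sub>R w) = m + 2 * s * (w \<bullet> w) + s^2 * ?q w"
    proof -
      have "?q (v + s *\<^sub>R w) = ?q v + s * (v \<bullet> (A *v w)) + s * (w \<bullet> (A *v v)) + s^2 * ?q w"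
        by (simp add: matrix_vector_right_distrib matrix_vector_mult_scaleR inner_add_left inner_add_right power2_eq_square algebra_simps)
      moreover have "v \<bullet> (A *v w) = w \<bullet> (A *v v)"
        using sym_inner[OF sym, of v w] by (simp add: inner_commute)
      ultimately show ?thesis using wAv m_def by simp
    qed
    have e2: "(norm (v + s *\<^sub>R w))^2 = 1 + s^2 * (w \<bullet> w)"
      unfolding power2_norm_eq_inner by (simp add: power2_norm_eq_inner inner_add_left inner_add_right vv vw inner_commute power2_eq_square algebra_simps)
    have "?q (v + s *\<^sub>R w) \<le> m * (norm (v + s *\<^sub>R w))^2" using bound[OF yS] .
    then show ?thesis unfolding e1 e2 by (simp add: algebra_simps)
  qed
  have "w \<bullet> w = 0"
  proof (rule ccontr)
    assume "w \<bullet> w \<noteq> 0"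
    hence N: "w \<bullet> w > 0" by (simp add: order_less_le)
    define C where "C = m * (w \<bullet> w) - ?q w"
    define s where "s = (w \<bullet> w) / (\<bar>C\<bar> + 1)"
    have s0: "s > 0" using N by (simp add: s_def)
    have "2 * s * (w \<bullet> w) \<le> s^2 * C" using key[of s] C_def by simp
    hence "2 * (w \<bullet> w) \<le> s * C" using s0 by (simp add: power2_eq_square mult.assoc)
    also have "... \<le> s * \<bar>C\<bar>" using s0 by (simp add: mult_left_mono)
    also have "... < w \<bullet> w"
    proof -
      have "s * \<bar>C\<bar> = (w \<bullet> w) * (\<bar>C\<bar> / (\<bar>C\<bar> + 1))" by (simp add: s_def)
      also have "... < (w \<bullet> w) * 1" using N by (intro mult_strict_left_mono) auto
      finally show ?thesis by simp
    qed
    finally show False using N by simp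
  qed
  hence "w = 0" by simp
  hence "A *v v = m *\<^sub>R v" by (simp add: w_def)
  thus ?thesis using vS nv m_def by blast
qed

lemma spectral_subspace:
  fixes A :: "real^'n^'n"
  assumes sym: "transpose A = A"
  shows "subspace S \<Longrightarrow> (\<forall>x\<in>S. A *v x \<in> S) \<Longrightarrow> \<exists>B. B \<subseteq> S \<and> span B = S \<and> pairwise orthogonal B
            \<and> (\<forall>x\<in>B. norm x = 1 \<and> A *v x = (x \<bullet> (A *v x)) *\<^sub>R x)"
proof (induction "dim S" arbitrary: S rule: less_induct)
  case less
  show ?case
  proof (cases "S = {0}")
    case True then show ?thesis by (intro exI[of _ "{}"]) auto
  next
    case False
    obtain v where v: "v \<in> S" "norm v = 1" "A *v v = (v \<bullet> (A *v v)) *\<^sub>R v"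
      using eigvec_exists[OF sym less.prems(1) _ False] less.prems(2) by blast
    have vv: "v \<bullet> v = 1" using v(2) by (simp add: norm_eq_1)
    define S' where "S' = S \<inter> {x. v \<bullet> x = 0}"
    have sub': "subspace S'" unfolding S'_def using less.prems(1) subspace_hyperplane[of v] by (rule subspace_inter)
    have inv': "\<forall>x\<in>S'. A *v x \<in> S'"
    proof
      fix x assume x: "x \<in> S'"
      have "v \<bullet> (A *v x) = (A *v v) \<bullet> x" using sym_inner[OF sym] by simp
      also have "... = 0" using x by (subst v(3)) (simp add: S'_def)
      finally show "A *v x \<in> S'" using x less.prems(2) by (simp add: S'_def)
    qed
    have "v \<notin> S'" using vv by (simp add: S'_def)
    hence "S' \<subset> S" using v(1) S'_def by blast
    hence "span S' \<subset> span S"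
      unfolding span_eq_iff[THEN iffD2, OF sub'] span_eq_iff[THEN iffD2, OF less.prems(1)] .
    hence dlt: "dim S' < dim S" by (rule dim_psubset)
    obtain B' where B': "B' \<subseteq> S'" "span B' = S'" "pairwise orthogonal B'"
        "\<forall>x\<in>B'. norm x = 1 \<and> A *v x = (x \<bullet> (A *v x)) *\<^sub>R x"
      using less.hyps[OF dlt sub' inv'] by blast
    show ?thesis
    proof (intro exI[of _ "insert v B'"] conjI)
      show sub: "insert v B' \<subseteq> S" using B'(1) v(1) by (auto simp: S'_def)
      show "span (insert v B') = S"
      proof
        show "span (insert v B') \<subseteq> S" using span_minimal[OF sub less.prems(1)] .
        show "S \<subseteq> span (insert v B')"
        proof
          fix x assume x: "x \<in> S"
          have "x - (v \<bullet> x) *\<^sub>R v \<in> S'"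
            using x v(1) less.prems(1) vv by (simp add: S'_def subspace_diff subspace_scale inner_diff_right)
          thus "x \<in> span (insert v B')" using B'(2) span_breakdown_eq by blast
        qed
      qed
      show "pairwise orthogonal (insert v B')"
        using B'(1,3) unfolding pairwise_insert
        by (auto simp: S'_def orthogonal_def inner_commute)
      show "\<forall>x\<in>insert v B'. norm x = 1 \<and> A *v x = (x \<bullet> (A *v x)) *\<^sub>R x"
        using B'(4) v by auto
    qed
  qed
qed

lemma spectral:
  fixes A :: "real^'n^'n"
  assumes sym: "transpose A = A"
  shows "\<exists>U d. orthogonal_matrix U \<and> A = U ** diag_mat d ** transpose U"
proof -
  obtain B where B: "span B = UNIV" "pairwise orthogonal B"
      "\<forall>x\<in>B. norm x = 1 \<and> A *v x = (x \<bullet> (A *v x)) *\<^sub>R x"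
    using spectral_subspace[OF sym, of UNIV] by auto
  have "0 \<notin> B" using B(3) by auto
  hence ind: "independent B" using pairwise_orthogonal_independent B(2) by blast
  have fin: "finite B" using independent_bound[OF ind] by blast
  have "card B = dim (UNIV :: (real^'n) set)" using dim_span_eq_card_independent[OF ind] B(1) by simp
  hence cB: "card B = card (UNIV :: 'n set)" by simp
  obtain f where f: "bij_betw f (UNIV::'n set) B"
    using finite_same_card_bij[OF _ fin] cB by (metis finite_class.finite_UNIV)
  have fB: "f c \<in> B" for c using f by (auto simp: bij_betw_def)
  have finj: "f i = f j \<Longrightarrow> i = j" for i j using f by (auto simp: bij_betw_def inj_def)
  define U where "U = (\<chi> r c. f c $ r)"
  define d where "d = (\<lambda>c. f c \<bullet> (A *v f c))"
  have col: "column c U = f c" for c by (simp add: U_def column_def vec_eq_iff)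
  have orth: "orthogonal_matrix U"
    unfolding orthogonal_matrix_orthonormal_columns col
    using B(2,3) fB finj unfolding pairwise_def by (metis norm_eq_1)
  have AU: "A ** U = U ** diag_mat d"
  proof -
    have "(A ** U) $ r $ c = (U ** diag_mat d) $ r $ c" for r c
    proof -
      have "(A ** U) $ r $ c = (A *v f c) $ r"
        by (simp add: matrix_matrix_mult_def matrix_vector_mult_def U_def)
      also have "... = d c * f c $ r"
      proof -
        have "A *v f c = d c *\<^sub>R f c" using B(3) fB[of c] unfolding d_def by blast
        thus ?thesis by simp
      qed
      also have "... = (U ** diag_mat d) $ r $ c"
        by (simp add: matrix_matrix_mult_def diag_mat_def U_def if_distrib cong: if_cong)
      finally show ?thesis .
    qed
    thus ?thesis by (simp add: vec_eq_iff)
  qed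
  have "A = A ** (U ** transpose U)" using orth by (simp add: orthogonal_matrix_def)
  also have "... = U ** diag_mat d ** transpose U" by (simp add: matrix_mul_assoc AU)
  finally show ?thesis using orth by blast
qed

declare transpose_matrix_vector[simp del]

lemma sum_if_mult: fixes i :: "'n::finite" shows "(\<Sum>k\<in>UNIV. (if i = k then a k else 0) * (b k::real)) = a i * b i"
proof -
  have "(\<Sum>k\<in>UNIV. (if i = k then a k else 0) * b k) = (\<Sum>k\<in>UNIV. if k = i then a k * b k else 0)"
    by (rule sum.cong) auto
  also have "... = a i * b i" by simp
  finally show ?thesis .
qed

lemma sum_if_mult': fixes j :: "'n::finite" shows "(\<Sum>k\<in>UNIV. (b k::real) * (if k = j then a k else 0)) = b j * a j"
proof -
  have "(\<Sum>k\<in>UNIV. b k * (if k = j then a k else 0)) = (\<Sum>k\<in>UNIV. if k = j then b k * a k else 0)"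
    by (rule sum.cong) auto
  also have "... = b j * a j" by simp
  finally show ?thesis .
qed

lemma scaleR_mm: "(c *\<^sub>R (M::real^'n^'m)) ** (N::real^'k^'n) = c *\<^sub>R (M ** N)"
  by (simp add: vec_eq_iff matrix_matrix_mult_def sum_distrib_left mult.assoc)

lemma diag_scale: "diag_mat (\<lambda>i. c * h i) = c *\<^sub>R diag_mat h"
  by (simp add: vec_eq_iff diag_mat_def)

lemma diag_left: "(diag_mat d ** M) $ i $ j = d i * M $ i $ j"
  unfolding matrix_matrix_mult_def diag_mat_def
  by (simp add: sum_if_mult)

lemma diag_right: "(M ** diag_mat d) $ i $ j = M $ i $ j * d j"
  unfolding matrix_matrix_mult_def diag_mat_def
  by (simp add: sum_if_mult')

lemma diag_mv: "diag_mat h *v z = (\<chi> k. h k * z $ k)"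
  unfolding matrix_vector_mult_def diag_mat_def
  by (simp add: vec_eq_iff sum_if_mult)

lemma diag_transpose: "transpose (diag_mat h) = diag_mat h"
  by (simp add: transpose_def diag_mat_def vec_eq_iff)

lemma orth_TU: "orthogonal_matrix U \<Longrightarrow> transpose U ** U = mat 1"
  by (simp add: orthogonal_matrix_def)
lemma orth_UT: "orthogonal_matrix U \<Longrightarrow> U ** transpose U = mat 1"
  by (simp add: orthogonal_matrix_def)

lemma orth_TU': "orthogonal_matrix U \<Longrightarrow> X ** transpose U ** U = X"
  by (metis matrix_mul_assoc matrix_mul_rid orth_TU)
lemma orth_UT': "orthogonal_matrix U \<Longrightarrow> X ** U ** transpose U = X"
  by (metis matrix_mul_assoc matrix_mul_rid orth_UT)

lemma decomp_unique:
  fixes U V :: "real^'n^'n"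
  assumes U: "orthogonal_matrix U" and V: "orthogonal_matrix V"
    and eq: "U ** diag_mat d ** transpose U = V ** diag_mat e ** transpose V"
  shows "U ** diag_mat (\<lambda>i. f (d i)) ** transpose U = V ** diag_mat (\<lambda>i. f (e i)) ** transpose V"
proof -
  define W where "W = transpose U ** V"
  have "diag_mat d ** W = transpose U ** (U ** diag_mat d ** transpose U) ** V"
    by (simp add: W_def matrix_mul_assoc orth_TU[OF U])
  also have "... = W ** diag_mat e"
    unfolding eq by (simp add: W_def matrix_mul_assoc orth_TU'[OF V])
  finally have dW: "diag_mat d ** W = W ** diag_mat e" .
  have "diag_mat (\<lambda>i. f (d i)) ** W = W ** diag_mat (\<lambda>i. f (e i))"
  proof -
    have "(diag_mat (\<lambda>i. f (d i)) ** W) $ i $ j = (W ** diag_mat (\<lambda>i. f (e i))) $ i $ j" for i j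
    proof -
      have "d i * W $ i $ j = W $ i $ j * e j"
        using dW by (metis diag_left diag_right)
      hence "W $ i $ j = 0 \<or> d i = e j" by auto
      thus ?thesis by (auto simp: diag_left diag_right)
    qed
    thus ?thesis by (simp add: vec_eq_iff)
  qed
  hence fdW: "diag_mat (\<lambda>i. f (d i)) ** transpose U ** V = transpose U ** V ** diag_mat (\<lambda>i. f (e i))"
    by (simp add: W_def matrix_mul_assoc)
  have "U ** diag_mat (\<lambda>i. f (d i)) ** transpose U
      = U ** diag_mat (\<lambda>i. f (d i)) ** transpose U ** V ** transpose V"
    by (simp add: orth_UT'[OF V])
  also have "... = U ** (diag_mat (\<lambda>i. f (d i)) ** transpose U ** V) ** transpose V"
    by (simp add: matrix_mul_assoc)
  also have "... = U ** (transpose U ** V ** diag_mat (\<lambda>i. f (e i))) ** transpose V"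
    by (simp only: fdW)
  also have "... = V ** diag_mat (\<lambda>i. f (e i)) ** transpose V"
    by (simp add: matrix_mul_assoc orth_UT[OF U])
  finally show ?thesis .
qed

lemma matfun_eq:
  fixes U :: "real^'n^'n"
  assumes U: "orthogonal_matrix U" and A: "A = U ** diag_mat d ** transpose U"
  shows "matfun f A = U ** diag_mat (\<lambda>i. f (d i)) ** transpose U"
proof -
  let ?P = "\<lambda>M. \<exists>U d. orthogonal_matrix U \<and> A = U ** diag_mat d ** transpose U
                               \<and> M = U ** diag_mat (\<lambda>i. f (d i)) ** transpose U"
  have "?P (U ** diag_mat (\<lambda>i. f (d i)) ** transpose U)" using U A by blast
  hence "?P (SOME M. ?P M)" by (rule someI)
  then obtain U' d' where U': "orthogonal_matrix U'" "A = U' ** diag_mat d' ** transpose U'"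
    and M: "(SOME M. ?P M) = U' ** diag_mat (\<lambda>i. f (d' i)) ** transpose U'" by blast
  have "matfun f A = U' ** diag_mat (\<lambda>i. f (d' i)) ** transpose U'"
    unfolding matfun_def using M by simp
  also have "... = U ** diag_mat (\<lambda>i. f (d i)) ** transpose U"
    using decomp_unique[OF U'(1) U] U'(2) A by metis
  finally show ?thesis .
qed

lemma mv_inner: "((M::real^'n^'m) *v a) \<bullet> y = a \<bullet> (transpose M *v y)"
  by (metis dot_lmul_matrix transpose_matrix_vector transpose_transpose)

lemma orth_TUv: "orthogonal_matrix U \<Longrightarrow> transpose U *v (U *v z) = (z::real^'n)"
  by (simp add: matrix_vector_mul_assoc orth_TU)
lemma orth_UTv: "orthogonal_matrix U \<Longrightarrow> U *v (transpose U *v z) = (z::real^'n)"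
  by (simp add: matrix_vector_mul_assoc orth_UT)

lemma orth_norm: "orthogonal_matrix (U::real^'n^'n) \<Longrightarrow> norm (transpose U *v z) = norm z"
proof -
  assume U: "orthogonal_matrix U"
  have "(transpose U *v z) \<bullet> (transpose U *v z) = z \<bullet> z"
    by (simp add: mv_inner orth_UTv[OF U])
  thus ?thesis by (simp add: norm_eq_sqrt_inner)
qed

lemma sd_mv:
  "(U ** diag_mat h ** transpose U) *v w = U *v (\<chi> k. h k * (transpose U *v w) $ k)"
  by (simp add: matrix_vector_mul_assoc[symmetric] diag_mv)

lemma sd_inner:
  "((U ** diag_mat h ** transpose U) *v w) \<bullet> z = (\<Sum>k\<in>UNIV. h k * (transpose U *v w) $ k * (transpose U *v z) $ k)"
  by (simp only: sd_mv mv_inner) (simp add: inner_vec_def mult.assoc)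

lemma col_axis: "column j U = U *v axis j 1"
  by (simp add: column_def matrix_vector_mult_def axis_def vec_eq_iff if_distrib cong: if_cong)

lemma sd_col:
  assumes U: "orthogonal_matrix U"
  shows "(U ** diag_mat h ** transpose U) *v column j U = h j *\<^sub>R column j U"
proof -
  have "(\<chi> k. h k * (transpose U *v column j U) $ k) = h j *\<^sub>R axis j 1"
    unfolding col_axis orth_TUv[OF U] by (simp add: axis_def vec_eq_iff)
  thus ?thesis unfolding sd_mv by (simp add: col_axis matrix_vector_mult_scaleR)
qed

lemma sd_sym: "transpose (U ** diag_mat h ** transpose U) = U ** diag_mat h ** transpose U"
  by (simp add: matrix_transpose_mul matrix_mul_assoc diag_transpose)

lemma sd_scale: "c *\<^sub>R (U ** diag_mat h ** transpose U) = U ** diag_mat (\<lambda>i. c * h i) ** transpose U"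
  by (metis diag_scale matrix_scalar_ac scaleR_mm)

lemma col_norm: "orthogonal_matrix (U::real^'n^'n) \<Longrightarrow> norm (column j U) = 1"
  by (simp add: orthogonal_matrix_orthonormal_columns)

lemma col_inner: "orthogonal_matrix (U::real^'n^'n) \<Longrightarrow> column i U \<bullet> column j U = (if i = j then 1 else 0)"
  by (auto simp: orthogonal_matrix_orthonormal_columns orthogonal_def norm_eq_1)

lemma key:
  fixes U V A FA :: "real^'n^'n"
  assumes V: "orthogonal_matrix V"
    and g: "\<And>k. (\<mu> k - c) * g (\<mu> k) = f (\<mu> k) - f c"
    and Au: "A *v u = c *\<^sub>R u" and fA: "FA *v u = f c *\<^sub>R u"
  shows "((V ** diag_mat (\<lambda>k. f (\<mu> k)) ** transpose V) - FA) *v u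
       = (V ** diag_mat (\<lambda>k. g (\<mu> k)) ** transpose V) *v (((V ** diag_mat \<mu> ** transpose V) - A) *v u)"
proof -
  define y where "y = transpose V *v u"
  have uy: "u = V *v y" by (simp add: y_def orth_UTv[OF V])
  have L: "((V ** diag_mat (\<lambda>k. f (\<mu> k)) ** transpose V) - FA) *v u = V *v (\<chi> k. (f (\<mu> k) - f c) * y $ k)"
  proof -
    have e1: "(V ** diag_mat (\<lambda>k. f (\<mu> k)) ** transpose V) *v u = V *v (\<chi> k. f (\<mu> k) * y $ k)"
      by (simp add: sd_mv y_def)
    have e2: "f c *\<^sub>R u = f c *\<^sub>R (V *v y)" using uy by simp
    have "((V ** diag_mat (\<lambda>k. f (\<mu> k)) ** transpose V) - FA) *v u
        = V *v (\<chi> k. f (\<mu> k) * y $ k) - f c *\<^sub>R (V *v y)"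
      by (simp only: matrix_vector_mult_diff_rdistrib fA e1 e2)
    also have "... = V *v ((\<chi> k. f (\<mu> k) * y $ k) - f c *\<^sub>R y)"
      by (simp add: matrix_vector_mult_diff_distrib matrix_vector_mult_scaleR)
    also have "(\<chi> k. f (\<mu> k) * y $ k) - f c *\<^sub>R y = (\<chi> k. (f (\<mu> k) - f c) * y $ k)"
      by (simp add: vec_eq_iff algebra_simps)
    finally show ?thesis .
  qed
  have B: "((V ** diag_mat \<mu> ** transpose V) - A) *v u = V *v (\<chi> k. (\<mu> k - c) * y $ k)"
  proof -
    have e1: "(V ** diag_mat \<mu> ** transpose V) *v u = V *v (\<chi> k. \<mu> k * y $ k)"
      by (simp add: sd_mv y_def)
    have e2: "c *\<^sub>R u = c *\<^sub>R (V *v y)" using uy by simp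
    have "((V ** diag_mat \<mu> ** transpose V) - A) *v u = V *v (\<chi> k. \<mu> k * y $ k) - c *\<^sub>R (V *v y)"
      by (simp only: matrix_vector_mult_diff_rdistrib Au e1 e2)
    also have "... = V *v ((\<chi> k. \<mu> k * y $ k) - c *\<^sub>R y)"
      by (simp add: matrix_vector_mult_diff_distrib matrix_vector_mult_scaleR)
    also have "(\<chi> k. \<mu> k * y $ k) - c *\<^sub>R y = (\<chi> k. (\<mu> k - c) * y $ k)"
      by (simp add: vec_eq_iff algebra_simps)
    finally show ?thesis .
  qed
  have "(V ** diag_mat (\<lambda>k. g (\<mu> k)) ** transpose V) *v (V *v (\<chi> k. (\<mu> k - c) * y $ k))
      = V *v (\<chi> k. g (\<mu> k) * ((\<mu> k - c) * y $ k))"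
    by (simp add: sd_mv orth_TUv[OF V])
  also have "(\<chi> k. g (\<mu> k) * ((\<mu> k - c) * y $ k)) = (\<chi> k. (f (\<mu> k) - f c) * y $ k)"
  proof -
    have "g (\<mu> k) * ((\<mu> k - c) * y $ k) = (f (\<mu> k) - f c) * y $ k" for k
      using g[of k] by (metis mult.assoc mult.commute)
    thus ?thesis by (simp add: vec_eq_iff)
  qed
  finally show ?thesis using L B by simp
qed

lemma sd_inner_bound:
  fixes V :: "real^'n^'n"
  assumes V: "orthogonal_matrix V" and H: "\<And>k. \<bar>h k\<bar> \<le> H"
  shows "\<bar>((V ** diag_mat h ** transpose V) *v w) \<bullet> z\<bar> \<le> real CARD('n) * H * norm w * norm z"
proof -
  have "\<bar>((V ** diag_mat h ** transpose V) *v w) \<bullet> z\<bar>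
      \<le> (\<Sum>k\<in>UNIV. \<bar>h k * (transpose V *v w) $ k * (transpose V *v z) $ k\<bar>)"
    unfolding sd_inner by (rule sum_abs)
  also have "... \<le> (\<Sum>k\<in>(UNIV::'n set). H * norm w * norm z)"
  proof (rule sum_mono)
    fix k
    have a: "\<bar>(transpose V *v w) $ k\<bar> \<le> norm w"
      using component_le_norm_cart[of "transpose V *v w" k] orth_norm[OF V] by simp
    have b: "\<bar>(transpose V *v z) $ k\<bar> \<le> norm z"
      using component_le_norm_cart[of "transpose V *v z" k] orth_norm[OF V] by simp
    show "\<bar>h k * (transpose V *v w) $ k * (transpose V *v z) $ k\<bar> \<le> H * norm w * norm z"
      unfolding abs_mult using H[of k] a b
      by (intro mult_mono) (auto intro: order_trans[OF abs_ge_zero H[of k]])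
  qed
  finally show ?thesis by simp
qed

lemma unit_quad:
  fixes V :: "real^'n^'n"
  assumes V: "orthogonal_matrix V" and v: "norm v = 1"
  shows "v \<bullet> ((V ** diag_mat h ** transpose V) *v v) = (\<Sum>k\<in>UNIV. h k * ((transpose V *v v) $ k)^2)"
    and "(\<Sum>k\<in>UNIV. ((transpose V *v v) $ k)^2) = 1"
proof -
  show "v \<bullet> ((V ** diag_mat h ** transpose V) *v v) = (\<Sum>k\<in>UNIV. h k * ((transpose V *v v) $ k)^2)"
    by (simp add: inner_commute[of v] sd_inner power2_eq_square mult.assoc)
  have "(\<Sum>k\<in>UNIV. ((transpose V *v v) $ k)^2) = (transpose V *v v) \<bullet> (transpose V *v v)"
    by (simp add: inner_vec_def power2_eq_square)
  also have "... = (norm (transpose V *v v))^2" by (simp add: power2_norm_eq_inner)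
  finally show "(\<Sum>k\<in>UNIV. ((transpose V *v v) $ k)^2) = 1" using orth_norm[OF V] v by simp
qed

definition dd :: "(real \<Rightarrow> real) \<Rightarrow> (real \<Rightarrow> real) \<Rightarrow> real \<Rightarrow> real \<Rightarrow> real" where
  "dd f f' x y = (if x = y then f' x else (f y - f x) / (y - x))"

lemma dd_prop: "(y - x) * dd f f' x y = f y - f x"
  by (simp add: dd_def)

lemma dd_sym: "dd f f' x y = dd f f' y x"
  by (auto simp: dd_def) (metis minus_diff_eq minus_divide_divide)

lemma dd_pos:
  assumes df: "\<And>x. x > 0 \<Longrightarrow> (f has_real_derivative f' x) (at x)"
    and pos: "\<And>x. x > 0 \<Longrightarrow> f' x > 0"
    and x: "x > 0" and y: "y > 0"
  shows "dd f f' x y > 0"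
proof -
  have *: "(f q - f p) / (q - p) > 0" if pq: "0 < p" "p < q" for p q
  proof -
    obtain z where z: "z > p" "z < q" "f q - f p = (q - p) * f' z"
      using MVT2[OF \<open>p < q\<close>, of f f'] df pq by (meson less_le_trans)
    thus ?thesis using pos[of z] pq by simp
  qed
  show ?thesis
  proof (cases x y rule: linorder_cases)
    case less then show ?thesis using *[OF x less] by (simp add: dd_def)
  next
    case equal then show ?thesis using pos[OF x] by (simp add: dd_def)
  next
    case greater then show ?thesis using *[OF y greater] dd_sym[of f f' x y] by (simp add: dd_def)
  qed
qed

lemma deriv_lip:
  assumes df': "\<And>x. x > 0 \<Longrightarrow> (f' has_real_derivative f'' x) (at x)"
    and a: "a > 0" and K: "\<And>x. a \<le> x \<Longrightarrow> x \<le> b \<Longrightarrow> \<bar>f'' x\<bar> \<le> K"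
    and p: "a \<le> p" "p \<le> b" and q: "a \<le> q" "q \<le> b"
  shows "\<bar>f' p - f' q\<bar> \<le> K * \<bar>p - q\<bar>"
proof -
  have *: "\<bar>f' v - f' u\<bar> \<le> K * \<bar>v - u\<bar>" if uv: "a \<le> u" "u < v" "v \<le> b" for u v
  proof -
    obtain z where z: "z > u" "z < v" "f' v - f' u = (v - u) * f'' z"
      using MVT2[OF \<open>u < v\<close>, of f' f''] df' uv a by (meson less_le_trans)
    have "\<bar>f'' z\<bar> \<le> K" using K z uv by simp
    thus ?thesis using z uv by (simp add: abs_mult mult.commute mult_left_mono)
  qed
  show ?thesis
  proof (cases p q rule: linorder_cases)
    case less then show ?thesis using *[of p q] p q by (simp add: abs_minus_commute)
  next
    case equal then show ?thesis by simp
  next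
    case greater then show ?thesis using *[of q p] p q by simp
  qed
qed

lemma dd_integral:
  assumes df: "\<And>x. x > 0 \<Longrightarrow> (f has_real_derivative f' x) (at x)"
    and x: "x > 0" and y: "y > 0"
  shows "((\<lambda>s. f' (x + s * (y - x))) has_integral dd f f' x y) {0..1}"
proof (cases "x = y")
  case True
  then show ?thesis using has_integral_const_real[of "f' x" 0 1] by (simp add: dd_def)
next
  case False
  define F where "F s = (1 / (y - x)) * f (x + s * (y - x))" for s
  have pos: "x + s * (y - x) > 0" if "0 \<le> s" "s \<le> 1" for s
  proof -
    have "x + s * (y - x) = (1 - s) * x + s * y" by (simp add: algebra_simps)
    moreover have "(1 - s) * x \<ge> 0" "s * y \<ge> 0" using that x y by auto
    moreover have "(1 - s) * x > 0 \<or> s * y > 0" using that x y by (cases "s = 1") auto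
    ultimately show ?thesis by linarith
  qed
  have D: "(F has_real_derivative f' (x + s * (y - x))) (at s)" if "0 \<le> s" "s \<le> 1" for s
  proof -
    have "((\<lambda>s. x + s * (y - x)) has_real_derivative (y - x)) (at s)"
      by (auto intro!: derivative_eq_intros)
    from DERIV_chain2[OF df[OF pos[OF that]] this]
    have "((\<lambda>s. f (x + s * (y - x))) has_real_derivative f' (x + s * (y - x)) * (y - x)) (at s)" .
    from DERIV_cmult[OF this, of "1 / (y - x)"]
    show ?thesis unfolding F_def using False by (simp add: DERIV_cong)
  qed
  have "(F has_vector_derivative (\<lambda>s. f' (x + s * (y - x))) s) (at s within {0..1})" if "s \<in> {0..1}" for s
  proof -
    have "(F has_vector_derivative f' (x + s * (y - x))) (at s)"
      using D[of s] that unfolding has_real_derivative_iff_has_vector_derivative by simp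
    thus ?thesis by (rule has_vector_derivative_at_within)
  qed
  hence "((\<lambda>s. f' (x + s * (y - x))) has_integral F 1 - F 0) {0..1}"
    using fundamental_theorem_of_calculus[of "0::real" 1 F "\<lambda>s. f' (x + s * (y - x))"] by simp
  moreover have "F 1 - F 0 = dd f f' x y"
    using False by (simp add: F_def dd_def diff_divide_distrib)
  ultimately show ?thesis by simp
qed

lemma dd_lip:
  assumes df: "\<And>x. x > 0 \<Longrightarrow> (f has_real_derivative f' x) (at x)"
    and df': "\<And>x. x > 0 \<Longrightarrow> (f' has_real_derivative f'' x) (at x)"
    and a: "a > 0" and K: "\<And>x. a \<le> x \<Longrightarrow> x \<le> b \<Longrightarrow> \<bar>f'' x\<bar> \<le> K" and K0: "K \<ge> 0"
    and x: "a \<le> x" "x \<le> b" and y: "a \<le> y" "y \<le> b" and z: "a \<le> z" "z \<le> b"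
  shows "\<bar>dd f f' x y - dd f f' x z\<bar> \<le> K * \<bar>y - z\<bar>"
proof -
  have I: "((\<lambda>s. f' (x + s * (y - x)) - f' (x + s * (z - x))) has_integral (dd f f' x y - dd f f' x z)) {0..1}"
    by (intro has_integral_diff dd_integral[OF df]) (use a x y z in auto)
  have inab: "a \<le> x + s * (w - x) \<and> x + s * (w - x) \<le> b" if "0 \<le> s" "s \<le> 1" "a \<le> w" "w \<le> b" for s w
  proof -
    have e: "x + s * (w - x) = (1 - s) * x + s * w" by (simp add: algebra_simps)
    have "(1 - s) * a \<le> (1 - s) * x" "s * a \<le> s * w" "(1 - s) * x \<le> (1 - s) * b" "s * w \<le> s * b"
      using that x by (auto intro: mult_left_mono)
    thus ?thesis unfolding e by (auto simp: algebra_simps)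
  qed
  have B: "norm (f' (x + s * (y - x)) - f' (x + s * (z - x))) \<le> K * \<bar>y - z\<bar>" if "s \<in> cbox 0 1" for s
  proof -
    have s: "0 \<le> s" "s \<le> 1" using that by auto
    have "\<bar>f' (x + s * (y - x)) - f' (x + s * (z - x))\<bar> \<le> K * \<bar>(x + s * (y - x)) - (x + s * (z - x))\<bar>"
      using inab[OF s y] inab[OF s z] by (intro deriv_lip[OF df' a K]) auto
    also have "\<bar>(x + s * (y - x)) - (x + s * (z - x))\<bar> = s * \<bar>y - z\<bar>"
    proof -
      have "(x + s * (y - x)) - (x + s * (z - x)) = s * (y - z)" by (simp add: algebra_simps)
      thus ?thesis using s by (simp add: abs_mult)
    qed
    also have "K * (s * \<bar>y - z\<bar>) \<le> K * \<bar>y - z\<bar>"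
      using s K0 by (simp add: mult_left_mono mult_left_le_one_le)
    finally show ?thesis by simp
  qed
  have "norm (dd f f' x y - dd f f' x z) \<le> K * \<bar>y - z\<bar> * Henstock_Kurzweil_Integration.content (cbox (0::real) 1)"
    by (rule has_integral_bound[OF _ _ B]) (use K0 I in auto)
  thus ?thesis by simp
qed

lemma dd2_bound:
  assumes df: "\<And>x. x > 0 \<Longrightarrow> (f has_real_derivative f' x) (at x)"
    and df': "\<And>x. x > 0 \<Longrightarrow> (f' has_real_derivative f'' x) (at x)"
    and a: "a > 0" and K: "\<And>x. a \<le> x \<Longrightarrow> x \<le> b \<Longrightarrow> \<bar>f'' x\<bar> \<le> K" and K0: "K \<ge> 0"
    and x: "a \<le> x" "x \<le> b" and y: "a \<le> y" "y \<le> b" and z: "a \<le> z" "z \<le> b"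
  shows "\<bar>dd (dd f f' x) (\<lambda>_. 0) z y\<bar> \<le> K"
proof (cases "z = y")
  case True then show ?thesis using K0 by (simp add: dd_def)
next
  case False
  have "\<bar>dd f f' x y - dd f f' x z\<bar> \<le> K * \<bar>y - z\<bar>" by (rule dd_lip[OF df df' a K K0 x y z])
  thus ?thesis using False by (simp add: dd_def abs_divide divide_le_eq)
qed

definition fth :: "real \<Rightarrow> real \<Rightarrow> real" where
  "fth \<theta> x = (if \<theta> = 0 then ln x else exp (\<theta> * ln x) / \<theta>)"
definition fth1 :: "real \<Rightarrow> real \<Rightarrow> real" where
  "fth1 \<theta> x = exp ((\<theta> - 1) * ln x)"
definition fth2 :: "real \<Rightarrow> real \<Rightarrow> real" where
  "fth2 \<theta> x = (\<theta> - 1) * exp ((\<theta> - 2) * ln x)"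

lemma exp_shift: "(x::real) > 0 \<Longrightarrow> exp ((a - 1) * ln x) = exp (a * ln x) / x"
proof -
  assume x: "x > 0"
  have e: "(a - 1) * ln x = a * ln x + (- ln x)" by (simp add: algebra_simps)
  have "exp ((a - 1) * ln x) = exp (a * ln x) * exp (- ln x)"
    by (simp only: e exp_add)
  also have "... = exp (a * ln x) / x" using x by (simp add: exp_minus divide_inverse)
  finally show ?thesis .
qed

lemma fth_deriv: "x > 0 \<Longrightarrow> (fth \<theta> has_real_derivative fth1 \<theta> x) (at x)"
proof -
  assume x: "x > 0"
  show ?thesis
  proof (cases "\<theta> = 0")
    case True
    have "(ln has_real_derivative inverse x) (at x)" using x by (rule DERIV_ln)
    moreover have "fth1 \<theta> x = inverse x" using True x by (simp add: fth1_def exp_minus)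
    moreover have "fth \<theta> = ln" using True by (simp add: fth_def fun_eq_iff)
    ultimately show ?thesis by simp
  next
    case False
    have e: "fth \<theta> = (\<lambda>x. exp (\<theta> * ln x) / \<theta>)" using False by (simp add: fth_def fun_eq_iff)
    have "((\<lambda>x. \<theta> * ln x) has_real_derivative \<theta> * inverse x) (at x)" by (rule DERIV_cmult[OF DERIV_ln[OF x]])
    hence "((\<lambda>x. exp (\<theta> * ln x)) has_real_derivative exp (\<theta> * ln x) * (\<theta> * inverse x)) (at x)" by (rule DERIV_fun_exp)
    hence d: "((\<lambda>x. exp (\<theta> * ln x) / \<theta>) has_real_derivative exp (\<theta> * ln x) * (\<theta> * inverse x) / \<theta>) (at x)"
      by (rule DERIV_cdivide)
    have v: "exp (\<theta> * ln x) * (\<theta> * inverse x) / \<theta> = fth1 \<theta> x"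
      using False x by (simp add: fth1_def exp_shift divide_inverse)
    show ?thesis unfolding e using DERIV_cong[OF d v] .
  qed
qed

lemma fth1_deriv: "x > 0 \<Longrightarrow> (fth1 \<theta> has_real_derivative fth2 \<theta> x) (at x)"
proof -
  assume x: "x > 0"
  have "((\<lambda>x. (\<theta> - 1) * ln x) has_real_derivative (\<theta> - 1) * inverse x) (at x)" by (rule DERIV_cmult[OF DERIV_ln[OF x]])
  hence d: "((\<lambda>x. exp ((\<theta> - 1) * ln x)) has_real_derivative exp ((\<theta> - 1) * ln x) * ((\<theta> - 1) * inverse x)) (at x)"
    by (rule DERIV_fun_exp)
  have v: "exp ((\<theta> - 1) * ln x) * ((\<theta> - 1) * inverse x) = fth2 \<theta> x"
  proof -
    have "exp ((\<theta> - 2) * ln x) = exp ((\<theta> - 1) * ln x) / x"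
      using exp_shift[OF x, of "\<theta> - 1"] by (simp add: algebra_simps)
    thus ?thesis using x by (simp add: fth2_def divide_inverse mult_ac)
  qed
  show ?thesis unfolding fth1_def[abs_def] using DERIV_cong[OF d v] .
qed

lemma fth1_pos: "fth1 \<theta> x > 0" by (simp add: fth1_def)

lemma fth2_bound:
  assumes a: "a > 0"
  shows "\<exists>K\<ge>0. \<forall>x. a \<le> x \<longrightarrow> x \<le> b \<longrightarrow> \<bar>fth2 \<theta> x\<bar> \<le> K"
proof -
  have "continuous_on {a..b} (fth2 \<theta>)"
    unfolding fth2_def using a by (intro continuous_intros) auto
  hence "compact (fth2 \<theta> ` {a..b})" by (rule compact_continuous_image) simp
  then obtain K where K: "K > 0" "\<forall>y\<in>fth2 \<theta> ` {a..b}. norm y \<le> K"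
    using compact_imp_bounded bounded_pos by metis
  thus ?thesis by (intro exI[of _ K]) auto
qed

lemma entry_TNU:
  "(transpose U ** N ** U) $ i $ j = column i U \<bullet> (N *v column j (U::real^'n^'n))"
proof -
  have "(transpose U ** N ** U) $ i $ j = (\<Sum>k\<in>UNIV. (\<Sum>l\<in>UNIV. U $ l $ i * N $ l $ k) * U $ k $ j)"
    by (simp add: matrix_matrix_mult_def transpose_def)
  also have "... = (\<Sum>k\<in>UNIV. \<Sum>l\<in>UNIV. U $ l $ i * N $ l $ k * U $ k $ j)"
    by (simp add: sum_distrib_right)
  also have "... = (\<Sum>l\<in>UNIV. \<Sum>k\<in>UNIV. U $ l $ i * N $ l $ k * U $ k $ j)"
    by (rule sum.swap)
  also have "... = column i U \<bullet> (N *v column j U)"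
    by (simp add: inner_vec_def column_def matrix_vector_mult_def sum_distrib_left mult.assoc)
  finally show ?thesis .
qed

lemma mm_add_rdistrib: "(Q1 + Q2) ** (B::real^'n^'n) = Q1 ** B + Q2 ** (B::real^'n^'n)"
  by (simp add: vec_eq_iff matrix_matrix_mult_def sum.distrib distrib_right)

lemma mm_tendsto:
  fixes A B :: "real^'n^'n"
  assumes "(Q \<longlongrightarrow> M) F"
  shows "((\<lambda>t. A ** Q t ** B) \<longlongrightarrow> A ** M ** B) F"
proof -
  have "linear (\<lambda>Q. A ** Q ** B)"
  proof (rule linearI)
    fix Q1 Q2 :: "real^'n^'n"
    show "A ** (Q1 + Q2) ** B = A ** Q1 ** B + A ** Q2 ** B"
      by (simp add: matrix_add_ldistrib mm_add_rdistrib)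
  next
    fix c :: real and Q1 :: "real^'n^'n"
    show "A ** (c *\<^sub>R Q1) ** B = c *\<^sub>R (A ** Q1 ** B)"
      by (simp add: matrix_scalar_ac scaleR_mm)
  qed
  hence "bounded_linear (\<lambda>Q. A ** Q ** B)" by (simp add: linear_conv_bounded_linear)
  from bounded_linear.tendsto[OF this assms] show ?thesis .
qed

lemma vd_from_quot:
  fixes F :: "real \<Rightarrow> 'a::real_normed_vector"
  assumes lim: "((\<lambda>t. (F t - F 0) /\<^sub>R t) \<longlongrightarrow> D) (at 0)"
  shows "(F has_vector_derivative D) (at 0)"
proof -
  have "((\<lambda>t. norm ((F t - F 0) /\<^sub>R t - D)) \<longlongrightarrow> 0) (at 0)"
    using tendsto_norm_zero[OF LIM_zero[OF lim]] .
  moreover have "eventually (\<lambda>t. norm ((F t - F 0) /\<^sub>R t - D) = norm (F t - F 0 - (t - 0) *\<^sub>R D) / norm (t - 0)) (at (0::real))"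
  proof -
    have "norm ((F t - F 0) /\<^sub>R t - D) = norm (F t - F 0 - (t - 0) *\<^sub>R D) / norm (t - 0)" if "t \<noteq> 0" for t
    proof -
      have "F t - F 0 - t *\<^sub>R D = t *\<^sub>R ((F t - F 0) /\<^sub>R t - D)"
        using that by (simp add: algebra_simps)
      thus ?thesis using that by simp
    qed
    thus ?thesis by (auto simp: eventually_at_filter)
  qed
  ultimately have "((\<lambda>t. norm (F t - F 0 - (t - 0) *\<^sub>R D) / norm (t - 0)) \<longlongrightarrow> 0) (at 0)"
    by (rule Lim_transform_eventually)
  thus ?thesis
    unfolding has_vector_derivative_def has_derivative_iff_norm
    by (auto intro: bounded_linear_scaleR_left)
qed

lemma phi_sd:
  fixes V :: "real^'n^'n"
  assumes V: "orthogonal_matrix V" and B: "B = V ** diag_mat \<mu> ** transpose V"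
  shows "phi \<theta> B = V ** diag_mat (\<lambda>k. fth \<theta> (\<mu> k)) ** transpose V"
proof (cases "\<theta> = 0")
  case True
  have "(\<lambda>k. ln (\<mu> k)) = (\<lambda>k. fth \<theta> (\<mu> k))" using True by (simp add: fth_def)
  thus ?thesis using True unfolding phi_def mat_log_def by (simp add: matfun_eq[OF V B])
next
  case False
  have "phi \<theta> B = (1/\<theta>) *\<^sub>R matfun (\<lambda>x. exp (\<theta> * ln x)) B" using False by (simp add: phi_def mat_pow_def)
  also have "... = V ** diag_mat (\<lambda>k. 1/\<theta> * exp (\<theta> * ln (\<mu> k))) ** transpose V"
    by (simp add: matfun_eq[OF V B] sd_scale)
  also have "(\<lambda>k. 1/\<theta> * exp (\<theta> * ln (\<mu> k))) = (\<lambda>k. fth \<theta> (\<mu> k))" using False by (simp add: fth_def fun_eq_iff)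
  finally show ?thesis .
qed

lemma sd_inner_col:
  assumes U: "orthogonal_matrix U"
  shows "column i U \<bullet> ((U ** diag_mat h ** transpose U) *v w) = h i * (column i U \<bullet> w)"
proof -
  have "column i U \<bullet> ((U ** diag_mat h ** transpose U) *v w) = ((U ** diag_mat h ** transpose U) *v column i U) \<bullet> w"
    using sym_inner[OF sd_sym, of U h "column i U" w] by simp
  also have "... = h i * (column i U \<bullet> w)" by (simp add: sd_col[OF U])
  finally show ?thesis .
qed

lemma sym_diff_inner:
  fixes P Q :: "real^'n^'n"
  assumes "transpose P = P" "transpose Q = Q"
  shows "u \<bullet> (P *v w) - u \<bullet> (Q *v w) = ((P - Q) *v u) \<bullet> w"
  using sym_inner[OF assms(1), of u w] sym_inner[OF assms(2), of u w]
  by (simp add: matrix_vector_mult_diff_rdistrib inner_diff_left)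

lemma unit_bound_sd:
  fixes V :: "real^'n^'n"
  assumes V: "orthogonal_matrix V" and v: "norm v = 1"
  shows "\<bar>v \<bullet> ((V ** diag_mat h ** transpose V) *v v)\<bar> \<le> (\<Sum>k\<in>UNIV. \<bar>h k\<bar>)"
    and "(\<forall>k. m \<le> h k) \<Longrightarrow> m \<le> v \<bullet> ((V ** diag_mat h ** transpose V) *v v)"
    and "(\<forall>k. h k \<le> M) \<Longrightarrow> v \<bullet> ((V ** diag_mat h ** transpose V) *v v) \<le> M"
proof -
  define y where "y k = ((transpose V *v v) $ k)^2" for k
  have q: "v \<bullet> ((V ** diag_mat h ** transpose V) *v v) = (\<Sum>k\<in>UNIV. h k * y k)"
    using unit_quad(1)[OF V v] by (simp add: y_def)
  have s1: "(\<Sum>k\<in>UNIV. y k) = 1" using unit_quad(2)[OF V v] by (simp add: y_def)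
  have y0: "y k \<ge> 0" for k by (simp add: y_def)
  have y1: "y k \<le> 1" for k
  proof -
    have "y k \<le> (\<Sum>k\<in>UNIV. y k)" by (rule member_le_sum) (auto simp: y0)
    thus ?thesis using s1 by simp
  qed
  show "\<bar>v \<bullet> ((V ** diag_mat h ** transpose V) *v v)\<bar> \<le> (\<Sum>k\<in>UNIV. \<bar>h k\<bar>)"
  proof -
    have "\<bar>\<Sum>k\<in>UNIV. h k * y k\<bar> \<le> (\<Sum>k\<in>UNIV. \<bar>h k * y k\<bar>)" by (rule sum_abs)
    also have "... \<le> (\<Sum>k\<in>UNIV. \<bar>h k\<bar>)"
      by (rule sum_mono) (simp add: abs_mult y0 y1 mult_left_le)
    finally show ?thesis using q by simp
  qed
  show "m \<le> v \<bullet> ((V ** diag_mat h ** transpose V) *v v)" if "\<forall>k. m \<le> h k"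
  proof -
    have "m = (\<Sum>k\<in>UNIV. m * y k)" using s1 by (simp add: sum_distrib_left[symmetric])
    also have "... \<le> (\<Sum>k\<in>UNIV. h k * y k)" using that y0 by (intro sum_mono mult_right_mono) auto
    finally show ?thesis using q by simp
  qed
  show "v \<bullet> ((V ** diag_mat h ** transpose V) *v v) \<le> M" if "\<forall>k. h k \<le> M"
  proof -
    have "(\<Sum>k\<in>UNIV. h k * y k) \<le> (\<Sum>k\<in>UNIV. M * y k)" using that y0 by (intro sum_mono mult_right_mono) auto
    also have "... = M" using s1 by (simp add: sum_distrib_left[symmetric])
    finally show ?thesis using q by simp
  qed
qed

lemma scaleR_mv: "((c::real) *\<^sub>R (A::real^'n^'m)) *v w = c *\<^sub>R (A *v w)"
  by (simp add: vec_eq_iff matrix_vector_mult_def sum_distrib_left mult.assoc)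

lemma sym_entry: "transpose (A::real^'n^'n) = A \<Longrightarrow> A $ j $ i = A $ i $ j"
  by (metis transpose_def vec_lambda_beta)

lemma dphi_formula:
  fixes S X U :: "real^'n^'n"
  assumes U: "orthogonal_matrix U" and S: "S = U ** diag_mat l ** transpose U"
    and lpos: "\<And>i. l i > 0" and X: "transpose X = X"
  shows "dphi \<theta> S X = U ** (\<chi> i j. dd (fth \<theta>) (fth1 \<theta>) (l j) (l i) * (column i U \<bullet> (X *v column j U))) ** transpose U"
proof -
  define f where "f = fth \<theta>"
  define f1 where "f1 = fth1 \<theta>"
  define u where "u i = column i U" for i
  define M where "M = (\<chi> i j. dd f f1 (l j) (l i) * (u i \<bullet> (X *v u j)))"
  define B where "B t = S + t *\<^sub>R X" for t
  define g where "g j = dd f f1 (l j)" for j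
  define h where "h i j = dd (g j) (\<lambda>_. 0) (l i)" for i j
  have Ssym: "transpose S = S" using S sd_sym by metis
  have Bsym: "transpose (B t) = B t" for t
  proof -
    have "transpose (B t) $ i $ j = B t $ i $ j" for i j
      using sym_entry[OF Ssym, of i j] sym_entry[OF X, of i j] by (simp add: B_def transpose_def)
    thus ?thesis by (simp add: vec_eq_iff)
  qed
  have "\<forall>t. \<exists>V d. orthogonal_matrix V \<and> B t = V ** diag_mat d ** transpose V"
    using spectral[OF Bsym] by blast
  then obtain V mu where VM: "\<And>t. orthogonal_matrix (V t)" "\<And>t. B t = V t ** diag_mat (mu t) ** transpose (V t)"
    by metis
  have F: "phi \<theta> (B t) = V t ** diag_mat (\<lambda>k. f (mu t k)) ** transpose (V t)" for t
    using phi_sd[OF VM(1) VM(2)] f_def by simp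
  have F0: "phi \<theta> S = U ** diag_mat (\<lambda>k. f (l k)) ** transpose U"
    using phi_sd[OF U S] f_def by simp
  have Su: "S *v u j = l j *\<^sub>R u j" for j using sd_col[OF U, of l j] S u_def by simp
  have Fu: "phi \<theta> S *v u j = f (l j) *\<^sub>R u j" for j unfolding F0 u_def by (rule sd_col[OF U])
  have BS: "(B t - S) *v w = t *\<^sub>R (X *v w)" for t w by (simp add: B_def scaleR_mv)
  have stepA: "(phi \<theta> (B t) - phi \<theta> S) *v u j
      = t *\<^sub>R ((V t ** diag_mat (\<lambda>k. g j (mu t k)) ** transpose (V t)) *v (X *v u j))" for t j
  proof -
    have "((V t ** diag_mat (\<lambda>k. f (mu t k)) ** transpose (V t)) - phi \<theta> S) *v u j
        = (V t ** diag_mat (\<lambda>k. g j (mu t k)) ** transpose (V t)) *v (((V t ** diag_mat (mu t) ** transpose (V t)) - S) *v u j)"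
      by (rule key[OF VM(1)]) (auto simp: g_def dd_prop Su Fu)
    thus ?thesis by (simp add: F[symmetric] VM(2)[symmetric] BS matrix_vector_mult_scaleR)
  qed
  have stepC: "((V t ** diag_mat (\<lambda>k. g j (mu t k)) ** transpose (V t)) - (U ** diag_mat (\<lambda>k. g j (l k)) ** transpose U)) *v u i
      = t *\<^sub>R ((V t ** diag_mat (\<lambda>k. h i j (mu t k)) ** transpose (V t)) *v (X *v u i))" for t i j
  proof -
    have "((V t ** diag_mat (\<lambda>k. g j (mu t k)) ** transpose (V t)) - (U ** diag_mat (\<lambda>k. g j (l k)) ** transpose U)) *v u i
        = (V t ** diag_mat (\<lambda>k. h i j (mu t k)) ** transpose (V t)) *v (((V t ** diag_mat (mu t) ** transpose (V t)) - S) *v u i)"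
      by (rule key[OF VM(1)]) (auto simp: h_def dd_prop Su[unfolded u_def] u_def sd_col[OF U])
    thus ?thesis by (simp add: VM(2)[symmetric] BS matrix_vector_mult_scaleR)
  qed
  obtain W e where We: "orthogonal_matrix W" "X = W ** diag_mat e ** transpose W"
    using spectral[OF X] by blast
  define KX where "KX = (\<Sum>k\<in>UNIV. \<bar>e k\<bar>)"
  have KX0: "KX \<ge> 0" by (simp add: KX_def sum_nonneg)
  define lmin where "lmin = Min (range l)"
  define lmax where "lmax = Max (range l)"
  have lmin_le: "lmin \<le> l k" for k by (simp add: lmin_def)
  have lmax_ge: "l k \<le> lmax" for k by (simp add: lmax_def)
  have lmin0: "lmin > 0"
  proof -
    have "lmin \<in> range l" unfolding lmin_def by (rule Min_in) auto
    thus ?thesis using lpos by auto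
  qed
  define \<delta> where "\<delta> = lmin / (2 * (KX + 1))"
  have \<delta>0: "\<delta> > 0" using lmin0 KX0 by (simp add: \<delta>_def)
  have tK: "\<bar>t\<bar> * KX \<le> lmin / 2" if "\<bar>t\<bar> \<le> \<delta>" for t
  proof -
    have "\<bar>t\<bar> * KX \<le> \<delta> * KX" using that KX0 by (simp add: mult_right_mono)
    also have "... = lmin / 2 * (KX / (KX + 1))" using KX0 by (simp add: \<delta>_def field_simps)
    also have "... \<le> lmin / 2 * 1" using lmin0 KX0 by (intro mult_left_mono) auto
    finally show ?thesis by simp
  qed
  define a where "a = lmin / 2"
  define b where "b = lmax + lmin / 2"
  have a0: "a > 0" using lmin0 by (simp add: a_def)
  have l_ab: "a \<le> l k" "l k \<le> b" for k using lmin_le[of k] lmax_ge[of k] lmin0 by (auto simp: a_def b_def)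
  have mu_ab: "a \<le> mu t k \<and> mu t k \<le> b" if "\<bar>t\<bar> \<le> \<delta>" for t k
  proof -
    define v where "v = column k (V t)"
    have nv: "norm v = 1" by (simp add: v_def col_norm[OF VM(1)])
    have vv: "v \<bullet> v = 1" using nv by (simp add: norm_eq_1)
    have "B t *v v = mu t k *\<^sub>R v" unfolding v_def by (subst VM(2)) (rule sd_col[OF VM(1)])
    hence "mu t k = v \<bullet> (B t *v v)" using vv by simp
    also have "... = v \<bullet> (S *v v) + t * (v \<bullet> (X *v v))"
      by (simp add: B_def matrix_vector_mult_add_rdistrib scaleR_mv inner_add_right)
    finally have m: "mu t k = v \<bullet> (S *v v) + t * (v \<bullet> (X *v v))" .
    have s1: "lmin \<le> v \<bullet> (S *v v)" unfolding S by (rule unit_bound_sd(2)[OF U nv]) (simp add: lmin_le)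
    have s2: "v \<bullet> (S *v v) \<le> lmax" unfolding S by (rule unit_bound_sd(3)[OF U nv]) (simp add: lmax_ge)
    have x1: "\<bar>v \<bullet> (X *v v)\<bar> \<le> KX" unfolding KX_def by (subst We(2)) (rule unit_bound_sd(1)[OF We(1) nv])
    have "\<bar>t * (v \<bullet> (X *v v))\<bar> \<le> \<bar>t\<bar> * KX" unfolding abs_mult by (rule mult_left_mono[OF x1]) simp
    hence "\<bar>t * (v \<bullet> (X *v v))\<bar> \<le> lmin / 2" using tK[OF that] by linarith
    thus ?thesis using m s1 s2 by (auto simp: a_def b_def abs_le_iff)
  qed
  obtain K where K0: "K \<ge> 0" and K: "\<And>x. a \<le> x \<Longrightarrow> x \<le> b \<Longrightarrow> \<bar>fth2 \<theta> x\<bar> \<le> K"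
    using fth2_bound[OF a0, of b \<theta>] by blast
  have hb: "\<bar>h i j (mu t k)\<bar> \<le> K" if "\<bar>t\<bar> \<le> \<delta>" for t i j k
    unfolding h_def g_def f_def f1_def
    by (rule dd2_bound[OF fth_deriv fth1_deriv a0 K K0]) (use l_ab mu_ab[OF that] in auto)
  define Q where "Q t = (transpose U ** (phi \<theta> (B t) - phi \<theta> S) ** U) /\<^sub>R t" for t
  have QM: "((\<lambda>t. Q t $ i $ j) \<longlongrightarrow> M $ i $ j) (at 0)" for i j
  proof -
    define w where "w = X *v u j"
    define C where "C = real CARD('n) * K * norm (X *v u i) * norm w"
    have Mij: "M $ i $ j = u i \<bullet> ((U ** diag_mat (\<lambda>k. g j (l k)) ** transpose U) *v w)"
      by (simp add: M_def u_def sd_inner_col[OF U] g_def w_def)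
    have diff: "Q t $ i $ j - M $ i $ j = t * (((V t ** diag_mat (\<lambda>k. h i j (mu t k)) ** transpose (V t)) *v (X *v u i)) \<bullet> w)"
      if "t \<noteq> 0" for t
    proof -
      have "Q t $ i $ j = inverse t * (u i \<bullet> ((phi \<theta> (B t) - phi \<theta> S) *v u j))"
        by (simp add: Q_def entry_TNU u_def)
      also have "... = u i \<bullet> ((V t ** diag_mat (\<lambda>k. g j (mu t k)) ** transpose (V t)) *v w)"
        using that by (simp add: stepA w_def)
      finally have "Q t $ i $ j - M $ i $ j = u i \<bullet> ((V t ** diag_mat (\<lambda>k. g j (mu t k)) ** transpose (V t)) *v w)
          - u i \<bullet> ((U ** diag_mat (\<lambda>k. g j (l k)) ** transpose U) *v w)" using Mij by simp
      also have "... = (((V t ** diag_mat (\<lambda>k. g j (mu t k)) ** transpose (V t)) - (U ** diag_mat (\<lambda>k. g j (l k)) ** transpose U)) *v u i) \<bullet> w"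
        by (rule sym_diff_inner[OF sd_sym sd_sym])
      also have "... = t * (((V t ** diag_mat (\<lambda>k. h i j (mu t k)) ** transpose (V t)) *v (X *v u i)) \<bullet> w)"
        by (simp add: stepC)
      finally show ?thesis .
    qed
    have ev: "eventually (\<lambda>t. norm (Q t $ i $ j - M $ i $ j) \<le> \<bar>t\<bar> * C) (at (0::real))"
    proof -
      have "norm (Q t $ i $ j - M $ i $ j) \<le> \<bar>t\<bar> * C" if "t \<noteq> 0" "\<bar>t\<bar> < \<delta>" for t
      proof -
        have "\<bar>((V t ** diag_mat (\<lambda>k. h i j (mu t k)) ** transpose (V t)) *v (X *v u i)) \<bullet> w\<bar> \<le> C"
          unfolding C_def by (rule sd_inner_bound[OF VM(1)]) (use hb that in auto)
        thus ?thesis using diff[OF that(1)] by (simp add: abs_mult mult_left_mono)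
      qed
      moreover have "eventually (\<lambda>t. t \<noteq> 0 \<and> \<bar>t\<bar> < \<delta>) (at (0::real))"
        using \<delta>0 by (auto simp: eventually_at dist_real_def intro!: exI[of _ \<delta>])
      ultimately show ?thesis by (auto elim: eventually_mono)
    qed
    have "((\<lambda>t. \<bar>t\<bar> * C) \<longlongrightarrow> \<bar>0\<bar> * C) (at (0::real))"
      by (intro tendsto_intros)
    hence "((\<lambda>t. \<bar>t\<bar> * C) \<longlongrightarrow> 0) (at (0::real))" by simp
    from Lim_null_comparison[OF ev this]
    show ?thesis by (rule LIM_zero_cancel)
  qed
  have Qlim: "(Q \<longlongrightarrow> M) (at 0)"
    by (intro vec_tendstoI) (use QM in simp)
  have quot: "(phi \<theta> (B t) - phi \<theta> (B 0)) /\<^sub>R t = U ** Q t ** transpose U" for t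
  proof -
    have "U ** (transpose U ** N ** U) ** transpose U = N" for N
      by (simp add: matrix_mul_assoc orth_UT[OF U] orth_UT'[OF U])
    thus ?thesis by (simp add: Q_def B_def matrix_scalar_ac scaleR_mm)
  qed
  have "((\<lambda>t. (phi \<theta> (B t) - phi \<theta> (B 0)) /\<^sub>R t) \<longlongrightarrow> U ** M ** transpose U) (at 0)"
    unfolding quot by (rule mm_tendsto[OF Qlim])
  hence "((\<lambda>t. phi \<theta> (B t)) has_vector_derivative U ** M ** transpose U) (at 0)"
    by (rule vd_from_quot)
  hence "dphi \<theta> S X = U ** M ** transpose U"
    unfolding dphi_def B_def by (rule vector_derivative_at)
  thus ?thesis by (simp add: M_def u_def f_def f1_def)
qed

lemma trace_conj:
  fixes U :: "real^'n^'n"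
  assumes U: "orthogonal_matrix U"
  shows "trace (U ** A ** transpose U ** (U ** B ** transpose U)) = (\<Sum>i\<in>UNIV. \<Sum>j\<in>UNIV. A $ i $ j * B $ j $ i)"
proof -
  have e1: "U ** A ** transpose U ** (U ** B ** transpose U) = U ** (A ** B) ** transpose U"
    by (simp add: matrix_mul_assoc orth_TU'[OF U])
  have e2: "trace (U ** (A ** B) ** transpose U) = trace (transpose U ** (U ** (A ** B)))"
    by (rule trace_mul_sym)
  have e3: "transpose U ** (U ** (A ** B)) = A ** B"
    by (simp only: matrix_mul_assoc orth_TU[OF U] matrix_mul_lid)
  have e4: "trace (A ** B) = (\<Sum>i\<in>UNIV. \<Sum>j\<in>UNIV. A $ i $ j * B $ j $ i)"
    by (simp add: trace_def matrix_matrix_mult_def)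
  show ?thesis unfolding e1 e2 e3 e4 ..
qed

theorem theorem4:
  fixes \<theta>1 \<theta>2 :: real and \<Sigma> :: "real^'n^'n"
  assumes "\<Sigma> \<in> SPD"
  shows "(\<forall>X\<in>Sym. \<forall>Y\<in>Sym. gE \<theta>1 \<theta>2 \<Sigma> X Y = gE \<theta>1 \<theta>2 \<Sigma> Y X)
       \<and> (\<forall>X\<in>Sym. X \<noteq> 0 \<longrightarrow> gE \<theta>1 \<theta>2 \<Sigma> X X > 0)
       \<and> (\<forall>X\<in>Sym. \<forall>Y\<in>Sym. gE \<theta>1 \<theta>2 \<Sigma> X Y = gE \<theta>2 \<theta>1 \<Sigma> X Y)"
proof -
  have Ssym: "transpose \<Sigma> = \<Sigma>" and Spos: "\<And>x. x \<noteq> 0 \<Longrightarrow> x \<bullet> (\<Sigma> *v x) > 0"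
    using assms by (auto simp: SPD_def)
  obtain U l where U: "orthogonal_matrix U" and S: "\<Sigma> = U ** diag_mat l ** transpose U"
    using spectral[OF Ssym] by blast
  define u where "u i = column i U" for i
  have lpos: "l i > 0" for i
  proof -
    have nu: "norm (u i) = 1" by (simp add: u_def col_norm[OF U])
    hence "u i \<noteq> 0" by auto
    hence "u i \<bullet> (\<Sigma> *v u i) > 0" by (rule Spos)
    moreover have "\<Sigma> *v u i = l i *\<^sub>R u i" unfolding u_def S by (rule sd_col[OF U])
    moreover have "u i \<bullet> u i = 1" using nu by (simp add: norm_eq_1)
    ultimately show ?thesis by simp
  qed
  define c where "c \<theta> i j = dd (fth \<theta>) (fth1 \<theta>) (l j) (l i)" for \<theta> i j
  define Xp where "Xp X i j = u i \<bullet> (X *v u j)" for X :: "real^'n^'n" and i j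
  have cpos: "c \<theta> i j > 0" for \<theta> i j
    unfolding c_def by (rule dd_pos[OF fth_deriv fth1_pos lpos lpos])
  have csym: "c \<theta> j i = c \<theta> i j" for \<theta> i j by (simp add: c_def dd_sym)
  have Xpsym: "Xp X j i = Xp X i j" if "X \<in> Sym" for X i j
  proof -
    have "transpose X = X" using that by (simp add: Sym_def)
    from sym_inner[OF this, of "u j" "u i"] show ?thesis by (simp add: Xp_def inner_commute)
  qed
  have D: "dphi \<theta> \<Sigma> X = U ** (\<chi> i j. c \<theta> i j * Xp X i j) ** transpose U" if "X \<in> Sym" for \<theta> X
    using dphi_formula[OF U S lpos, of X \<theta>] that by (simp add: Sym_def c_def Xp_def u_def)
  have G: "gE \<theta>a \<theta>b \<Sigma> X Y = (\<Sum>i\<in>UNIV. \<Sum>j\<in>UNIV. c \<theta>a i j * c \<theta>b i j * Xp X i j * Xp Y i j)"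
    if "X \<in> Sym" "Y \<in> Sym" for \<theta>a \<theta>b X Y
  proof -
    have "gE \<theta>a \<theta>b \<Sigma> X Y = (\<Sum>i\<in>UNIV. \<Sum>j\<in>UNIV. (c \<theta>a i j * Xp X i j) * (c \<theta>b j i * Xp Y j i))"
      unfolding gE_def D[OF that(1)] D[OF that(2)] trace_conj[OF U] by simp
    also have "... = (\<Sum>i\<in>UNIV. \<Sum>j\<in>UNIV. c \<theta>a i j * c \<theta>b i j * Xp X i j * Xp Y i j)"
      by (simp add: csym Xpsym[OF that(2)] mult_ac)
    finally show ?thesis .
  qed
  show ?thesis
  proof (intro conjI ballI impI)
    fix X Y :: "real^'n^'n" assume "X \<in> Sym" "Y \<in> Sym"
    thus "gE \<theta>1 \<theta>2 \<Sigma> X Y = gE \<theta>1 \<theta>2 \<Sigma> Y X" by (simp add: G mult_ac)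
  next
    fix X Y :: "real^'n^'n" assume "X \<in> Sym" "Y \<in> Sym"
    thus "gE \<theta>1 \<theta>2 \<Sigma> X Y = gE \<theta>2 \<theta>1 \<Sigma> X Y" by (simp add: G mult_ac)
  next
    fix X :: "real^'n^'n" assume X: "X \<in> Sym" and X0: "X \<noteq> 0"
    define T where "T i j = c \<theta>1 i j * c \<theta>2 i j * Xp X i j * Xp X i j" for i j
    have T0: "T i j \<ge> 0" for i j
      using cpos[of \<theta>1 i j] cpos[of \<theta>2 i j] by (simp add: T_def mult.assoc)
    have "\<exists>i j. Xp X i j \<noteq> 0"
    proof (rule ccontr)
      assume "\<not> (\<exists>i j. Xp X i j \<noteq> 0)"
      hence "transpose U ** X ** U = 0" by (simp add: vec_eq_iff entry_TNU Xp_def u_def)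
      hence "U ** (transpose U ** X ** U) ** transpose U = 0" by simp
      moreover have "U ** (transpose U ** X ** U) ** transpose U = X"
        by (simp add: matrix_mul_assoc orth_UT[OF U] orth_UT'[OF U])
      ultimately show False using X0 by simp
    qed
    then obtain i0 j0 where ij: "Xp X i0 j0 \<noteq> 0" by blast
    have sq: "Xp X i0 j0 * Xp X i0 j0 > 0" using ij by (simp add: power2_eq_square[symmetric])
    have Tp: "T i0 j0 > 0"
      using cpos[of \<theta>1 i0 j0] cpos[of \<theta>2 i0 j0] sq by (simp add: T_def mult.assoc)
    have "T i0 j0 \<le> (\<Sum>j\<in>UNIV. T i0 j)" by (rule member_le_sum) (auto simp: T0)
    also have "... \<le> (\<Sum>i\<in>UNIV. \<Sum>j\<in>UNIV. T i j)"
      by (rule member_le_sum[of _ _ "\<lambda>i. \<Sum>j\<in>UNIV. T i j"]) (auto intro: sum_nonneg T0)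
    finally have "(\<Sum>i\<in>UNIV. \<Sum>j\<in>UNIV. T i j) > 0" using Tp by linarith
    thus "gE \<theta>1 \<theta>2 \<Sigma> X X > 0" using G[OF X X] by (simp add: T_def)
  qed
qed

end
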